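(* Let $m>1$ be odd, let $\varphi:\mathbb{Z}_{2m}\to\{\pm1\}$ be a binary sequence, let $\phi$ be the binary $(2,m)$-array obtained from $\varphi$ by the rule below, and let $f(k)=\frac{1-\mathrm{i}}{2}(\phi(0,k)+\mathrm{i}\phi(1,k))$ for $k\in\mathbb{Z}_m$. Then $f$ is an OQS if and only if $\varphi$ is a GOBS of length $2m$. The rule ($a\in\{0,1\}$, $k$ an integer in $\{0,\ldots,m-1\}$, arguments of $\varphi$ modulo $2m$): if $m\equiv1\pmod 4$, $\phi(a,k)$ equals $\varphi(k+am)$, $(-1)^{1-a}\varphi(k+(1-a)m)$, $-\varphi(k+am)$, $(-1)^a\varphi(k+(1-a)m)$ according as $k\equiv 0,1,2,3\pmod 4$; if $m\equiv 3\pmod 4$, $\phi(a,k)$ equals $(-1)^a\varphi(k+am)$, $\varphi(k+(1-a)m)$, $(-1)^{1-a}\varphi(k+am)$, $-\varphi(k+(1-a)m)$ according as $k\equiv 0,1,2,3\pmod 4$.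
   Context: $\mathrm{i}=\sqrt{-1}$. For a finite abelian group $A$ and $\psi:A\to\mathbb{C}$, $R_\psi(x)=\sum_{b\in A}\psi(b)\overline{\psi(x+b)}$. A quaternary sequence $f:\mathbb{Z}_m\to\{\pm1,\pm\mathrm{i}\}$, $m$ odd, is an OQS if $|R_f(w)|=1$ for all $1\le w\le m-1$. For a binary sequence $\varphi:\mathbb{Z}_{2m}\to\{\pm1\}$, its expansion is $\varphi':\mathbb{Z}_{4m}\to\{\pm1\}$ with $\varphi'(x)=\varphi(x\bmod 2m)$ for $x\in\{0,\ldots,2m-1\}$ and $\varphi'(x)=-\varphi(x\bmod 2m)$ for $x\in\{2m,\ldots,4m-1\}$. $\varphi$ is a GOBS if $R_{\varphi'}(x)\in\{0,4,-4\}$ for all $x\in\mathbb{Z}_{4m}\setminus\{0,2m\}$ and exactly $2m$ elements $x\in\mathbb{Z}_{4m}$ satisfy $R_{\varphi'}(x)=0$. *)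

theory Defs
  imports Complex_Main
begin

text \<open>Sequences on Z_n are represented as functions on nat, only the values on
{0..<n} matter; indices are reduced modulo n.\<close>

definition autocorr :: "nat \<Rightarrow> (nat \<Rightarrow> complex) \<Rightarrow> nat \<Rightarrow> complex" where
  "autocorr n \<psi> x = (\<Sum>b<n. \<psi> b * cnj (\<psi> ((x + b) mod n)))"

definition quaternary_seq :: "nat \<Rightarrow> (nat \<Rightarrow> complex) \<Rightarrow> bool" where
  "quaternary_seq m f \<longleftrightarrow> (\<forall>k<m. f k \<in> {1, -1, \<i>, -\<i>})"

definition OQS :: "nat \<Rightarrow> (nat \<Rightarrow> complex) \<Rightarrow> bool" where
  "OQS m f \<longleftrightarrow> odd m \<and> quaternary_seq m f \<and>
     (\<forall>w. 1 \<le> w \<and> w \<le> m - 1 \<longrightarrow> cmod (autocorr m f w) = 1)"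

definition binary_seq :: "nat \<Rightarrow> (nat \<Rightarrow> int) \<Rightarrow> bool" where
  "binary_seq n \<phi> \<longleftrightarrow> (\<forall>x<n. \<phi> x \<in> {1, -1})"

definition expansion :: "nat \<Rightarrow> (nat \<Rightarrow> int) \<Rightarrow> nat \<Rightarrow> int" where
  "expansion m \<phi> x = (if x mod (4*m) < 2*m then \<phi> (x mod (4*m) mod (2*m))
                        else - \<phi> (x mod (4*m) mod (2*m)))"

definition GOBS :: "nat \<Rightarrow> (nat \<Rightarrow> int) \<Rightarrow> bool" where
  "GOBS m \<phi> \<longleftrightarrow> binary_seq (2*m) \<phi> \<and>
     (let R = autocorr (4*m) (\<lambda>x. of_int (expansion m \<phi> x)) in
       (\<forall>x<4*m. x \<noteq> 0 \<and> x \<noteq> 2*m \<longrightarrow> R x \<in> {0, 4, -4}) \<and>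
       card {x. x < 4*m \<and> R x = 0} = 2*m)"

definition arr :: "nat \<Rightarrow> (nat \<Rightarrow> int) \<Rightarrow> nat \<Rightarrow> nat \<Rightarrow> int" where
  "arr m \<phi> a k =
    (let p = (\<lambda>x. \<phi> (x mod (2*m))); u = p (k + a*m); v = p (k + (1-a)*m) in
     if m mod 4 = 1 then
       (if k mod 4 = 0 then u
        else if k mod 4 = 1 then (-1) ^ (1-a) * v
        else if k mod 4 = 2 then - u
        else (-1) ^ a * v)
     else
       (if k mod 4 = 0 then (-1) ^ a * u
        else if k mod 4 = 1 then v
        else if k mod 4 = 2 then (-1) ^ (1-a) * u
        else - v))"

definition quat_of :: "nat \<Rightarrow> (nat \<Rightarrow> int) \<Rightarrow> nat \<Rightarrow> complex" where
  "quat_of m \<phi> k = (1 - \<i>) / 2 * (of_int (arr m \<phi> 0 k) + \<i> * of_int (arr m \<phi> 1 k))"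

end

theory Submission
  imports Defs "HOL-Number_Theory.Cong"
begin

definition EE :: "nat \<Rightarrow> (nat \<Rightarrow> int) \<Rightarrow> nat \<Rightarrow> nat \<Rightarrow> int" where
 "EE m \<phi> t k = (if t = 0 then arr m \<phi> 0 k else if t = 1 then arr m \<phi> 1 k
    else if t = 2 then - arr m \<phi> 0 k else - arr m \<phi> 1 k)"

lemma key:
  assumes "odd m" "y < 4*m"
  shows "expansion m \<phi> y = EE m \<phi> (y mod 4) (y mod m)"
proof -
  have m0: "m > 0" using assms by (auto intro: Nat.gr0I)
  define k where "k = y mod m"
  define j where "j = y div m"
  have y: "y = k + j*m" unfolding k_def j_def by simp
  have k: "k < m" unfolding k_def using m0 by simp
  have j: "j < 4" unfolding j_def using assms(2) by (simp add: less_mult_imp_div_less)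
  have m4: "m mod 4 = 1 \<or> m mod 4 = 3" using assms(1) by presburger
  have k4: "k mod 4 = 0 \<or> k mod 4 = 1 \<or> k mod 4 = 2 \<or> k mod 4 = 3" by presburger
  have ymod: "y mod 4 = (k mod 4 + j * (m mod 4)) mod 4"
    unfolding y by (simp add: mod_add_left_eq) (metis mod_add_right_eq mod_mult_right_eq)
  have ymm: "y mod m = k" by (simp add: k_def)
  have a0: "(k + 0 * m) mod (2*m) = k" "(k + (1-0) * m) mod (2*m) = k + m"
       "(k + 1 * m) mod (2*m) = k + m" "(k + (1-1) * m) mod (2*m) = k" using k by auto
  have e: "expansion m \<phi> y = (if j = 0 then \<phi> k else if j = 1 then \<phi> (k+m) else if j = 2 then - \<phi> k else - \<phi> (k+m))"
  proof -
    have "j = 0 \<or> j = 1 \<or> j = 2 \<or> j = 3" using j by auto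
    then show ?thesis
    proof (elim disjE)
      assume "j = 0" then show ?thesis using k unfolding expansion_def y by simp
    next
      assume "j = 1" then show ?thesis using k unfolding expansion_def y by simp
    next
      assume "j = 2" 
      then have "(k + j*m) mod (4*m) = k + 2*m" "(k + 2*m) mod (2*m) = k" using k by auto
      then show ?thesis using k \<open>j=2\<close> unfolding expansion_def y by simp
    next
      assume "j = 3" 
      then have "(k + j*m) mod (4*m) = k + 3*m" "(k + 3*m) mod (2*m) = k+m" using k
        by (auto simp: mod_if)
      then show ?thesis using k \<open>j=3\<close> unfolding expansion_def y by simp
    qed
  qed
  have "j = 0 \<or> j = 1 \<or> j = 2 \<or> j = 3" using j by auto
  then show ?thesis
    unfolding e ymod ymm EE_def arr_def Let_def using m4 k4 a0
    apply (elim disjE)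
    apply simp_all
    done
qed

lemma coprime4: "odd (m::nat) \<Longrightarrow> coprime (4::nat) m"
proof -
  assume "odd m"
  then have "coprime (2::nat) m" by simp
  then have "coprime ((2::nat)^2) m" by (simp only: coprime_power_left_iff) simp
  then show ?thesis by simp
qed

lemma pi_inj: "odd (m::nat) \<Longrightarrow> inj_on (\<lambda>y. (y mod 4, y mod m)) {..<4*m}"
proof (rule inj_onI)
  fix y1 y2 assume om: "odd m" and y1: "y1 \<in> {..<4*m}" and y2: "y2 \<in> {..<4*m}"
    and eq: "(y1 mod 4, y1 mod m) = (y2 mod 4, y2 mod (m::nat))"
  have "[y1 = y2] (mod 4)" "[y1 = y2] (mod m)" using eq by (auto simp: cong_def)
  then have "[y1 = y2] (mod 4*m)" using coprime_cong_mult_nat coprime4[OF om] by blast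
  then show "y1 = y2" using y1 y2 cong_less_imp_eq_nat by auto
qed

lemma pi_img: "odd (m::nat) \<Longrightarrow> (\<lambda>y. (y mod 4, y mod m)) ` {..<4*m} = {..<4} \<times> {..<m}"
proof -
  assume om: "odd m"
  then have m0: "m > 0" by (auto intro: Nat.gr0I)
  have sub: "(\<lambda>y. (y mod 4, y mod m)) ` {..<4*m} \<subseteq> {..<4} \<times> {..<m}" using m0 by auto
  have "card ((\<lambda>y. (y mod 4, y mod m)) ` {..<4*m}) = 4*m"
    using card_image[OF pi_inj[OF om]] by simp
  also have "\<dots> = card ({..<4::nat} \<times> {..<m})" by (simp add: card_cartesian_product)
  finally show ?thesis using card_subset_eq[OF _ sub] by simp
qed

lemma sum_pi: fixes m :: nat
  assumes "odd m"
  shows "(\<Sum>y<4*m. H (y mod 4) (y mod m)) = (\<Sum>t<4. \<Sum>k<m. (H t k :: int))"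
proof -
  have "(\<Sum>y<4*m. H (y mod 4) (y mod m)) = (\<Sum>p\<in>(\<lambda>y. (y mod 4, y mod m)) ` {..<4*m}. case_prod H p)"
    by (subst sum.reindex[OF pi_inj[OF assms]]) simp
  also have "\<dots> = (\<Sum>p\<in>{..<4} \<times> {..<m}. case_prod H p)" by (simp add: pi_img[OF assms])
  also have "\<dots> = (\<Sum>t<4. \<Sum>k<m. H t k)" by (simp add: sum.cartesian_product)
  finally show ?thesis .
qed

lemma sum4: "(\<Sum>t<(4::nat). g t) = g 0 + g 1 + g 2 + (g 3 :: int)"
  by (simp add: eval_nat_numeral add.assoc)

definition RR :: "nat \<Rightarrow> (nat \<Rightarrow> int) \<Rightarrow> nat \<Rightarrow> int" where
  "RR m \<phi> x = (\<Sum>y<4*m. expansion m \<phi> y * expansion m \<phi> ((x+y) mod (4*m)))"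

definition S0 :: "nat \<Rightarrow> (nat \<Rightarrow> int) \<Rightarrow> nat \<Rightarrow> int" where
  "S0 m \<phi> w = (\<Sum>k<m. arr m \<phi> 0 k * arr m \<phi> 0 ((w+k) mod m) + arr m \<phi> 1 k * arr m \<phi> 1 ((w+k) mod m))"

definition S1 :: "nat \<Rightarrow> (nat \<Rightarrow> int) \<Rightarrow> nat \<Rightarrow> int" where
  "S1 m \<phi> w = (\<Sum>k<m. arr m \<phi> 0 k * arr m \<phi> 1 ((w+k) mod m) - arr m \<phi> 1 k * arr m \<phi> 0 ((w+k) mod m))"

lemma RR_EE:
  assumes "odd m"
  shows "RR m \<phi> x = (\<Sum>t<4. \<Sum>k<m. EE m \<phi> t k * EE m \<phi> ((x mod 4 + t) mod 4) ((x mod m + k) mod m))"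
proof -
  have m0: "m > 0" using assms by (auto intro: Nat.gr0I)
  have "RR m \<phi> x = (\<Sum>y<4*m. EE m \<phi> (y mod 4) (y mod m) * EE m \<phi> ((x mod 4 + y mod 4) mod 4) ((x mod m + y mod m) mod m))"
    unfolding RR_def
  proof (rule sum.cong[OF refl])
    fix y assume "y \<in> {..<4*m}"
    then have y: "y < 4*m" by simp
    have xy: "(x+y) mod (4*m) < 4*m" using m0 by simp
    have d4: "(x+y) mod (4*m) mod 4 = (x mod 4 + y mod 4) mod 4"
      by (simp add: mod_mod_cancel mod_add_eq)
    have dm: "(x+y) mod (4*m) mod m = (x mod m + y mod m) mod m"
      by (simp add: mod_mod_cancel mod_add_eq)
    show "expansion m \<phi> y * expansion m \<phi> ((x+y) mod (4*m)) = EE m \<phi> (y mod 4) (y mod m) * EE m \<phi> ((x mod 4 + y mod 4) mod 4) ((x mod m + y mod m) mod m)"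
      using key[OF assms y] key[OF assms xy] d4 dm by simp
  qed
  also have "\<dots> = (\<Sum>t<4. \<Sum>k<m. EE m \<phi> t k * EE m \<phi> ((x mod 4 + t) mod 4) ((x mod m + k) mod m))"
    by (rule sum_pi[OF assms, where H = "\<lambda>t k. EE m \<phi> t k * EE m \<phi> ((x mod 4 + t) mod 4) ((x mod m + k) mod m)"])
  finally show ?thesis .
qed

lemma RR_S:
  assumes "odd m"
  shows "RR m \<phi> x = (if x mod 4 = 0 then 2 * S0 m \<phi> (x mod m) else if x mod 4 = 1 then 2 * S1 m \<phi> (x mod m)
     else if x mod 4 = 2 then - 2 * S0 m \<phi> (x mod m) else - 2 * S1 m \<phi> (x mod m))"
proof -
  have "RR m \<phi> x = (\<Sum>k<m. \<Sum>t<4. EE m \<phi> t k * EE m \<phi> ((x mod 4 + t) mod 4) ((x mod m + k) mod m))"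
    unfolding RR_EE[OF assms] by (rule sum.swap)
  also have "\<dots> = (\<Sum>k<m. (if x mod 4 = 0 then 2 * (arr m \<phi> 0 k * arr m \<phi> 0 ((x mod m+k) mod m) + arr m \<phi> 1 k * arr m \<phi> 1 ((x mod m+k) mod m))
     else if x mod 4 = 1 then 2 * (arr m \<phi> 0 k * arr m \<phi> 1 ((x mod m+k) mod m) - arr m \<phi> 1 k * arr m \<phi> 0 ((x mod m+k) mod m))
     else if x mod 4 = 2 then - 2 * (arr m \<phi> 0 k * arr m \<phi> 0 ((x mod m+k) mod m) + arr m \<phi> 1 k * arr m \<phi> 1 ((x mod m+k) mod m))
     else - 2 * (arr m \<phi> 0 k * arr m \<phi> 1 ((x mod m+k) mod m) - arr m \<phi> 1 k * arr m \<phi> 0 ((x mod m+k) mod m))))"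
  proof (rule sum.cong[OF refl])
    fix k
    have "x mod 4 = 0 \<or> x mod 4 = 1 \<or> x mod 4 = 2 \<or> x mod 4 = 3" by presburger
    then show "(\<Sum>t<4. EE m \<phi> t k * EE m \<phi> ((x mod 4 + t) mod 4) ((x mod m + k) mod m)) = (if x mod 4 = 0 then 2 * (arr m \<phi> 0 k * arr m \<phi> 0 ((x mod m+k) mod m) + arr m \<phi> 1 k * arr m \<phi> 1 ((x mod m+k) mod m))
     else if x mod 4 = 1 then 2 * (arr m \<phi> 0 k * arr m \<phi> 1 ((x mod m+k) mod m) - arr m \<phi> 1 k * arr m \<phi> 0 ((x mod m+k) mod m))
     else if x mod 4 = 2 then - 2 * (arr m \<phi> 0 k * arr m \<phi> 0 ((x mod m+k) mod m) + arr m \<phi> 1 k * arr m \<phi> 1 ((x mod m+k) mod m))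
     else - 2 * (arr m \<phi> 0 k * arr m \<phi> 1 ((x mod m+k) mod m) - arr m \<phi> 1 k * arr m \<phi> 0 ((x mod m+k) mod m)))"
      by (elim disjE) (simp_all add: sum4 EE_def algebra_simps)
  qed
  also have "\<dots> = (if x mod 4 = 0 then 2 * S0 m \<phi> (x mod m) else if x mod 4 = 1 then 2 * S1 m \<phi> (x mod m) else if x mod 4 = 2 then - 2 * S0 m \<phi> (x mod m) else - 2 * S1 m \<phi> (x mod m))"
    by (cases "x mod 4 = 0"; cases "x mod 4 = 1"; cases "x mod 4 = 2"; simp add: S0_def S1_def sum_distrib_left)
  finally show ?thesis .
qed


lemma arr_pm:
  assumes "binary_seq (2*m) \<phi>" "m > 0"
  shows "arr m \<phi> a k \<in> {1, -1}"
proof -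
  have p: "\<And>x. \<phi> (x mod (2*m)) \<in> {1,-1}" using assms unfolding binary_seq_def by simp
  have q: "\<And>n::nat. ((-1::int)^n) \<in> {1,-1}" by (induct_tac n) auto
  have r: "\<And>a b::int. a \<in> {1,-1} \<Longrightarrow> b \<in> {1,-1} \<Longrightarrow> a * b \<in> {1,-1}" by auto
  have nr: "\<And>a::int. a \<in> {1,-1} \<Longrightarrow> - a \<in> {1,-1}" by auto
  show ?thesis unfolding arr_def Let_def by (simp del: insert_iff add: p r q nr)
qed

lemma rot_sum:
  assumes "(m::nat) > 0"
  shows "(\<Sum>k<m. g ((w+k) mod m)) = (\<Sum>k<m. (g k :: int))"
proof -
  have inj: "inj_on (\<lambda>k. (w+k) mod m) {..<m}"
  proof (rule inj_onI)
    fix a b assume "a \<in> {..<m}" "b \<in> {..<m}" "(w+a) mod m = (w+b) mod m"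
    then show "a = b" using cong_add_lcancel_nat cong_less_imp_eq_nat unfolding cong_def by fastforce
  qed
  have img: "(\<lambda>k. (w+k) mod m) ` {..<m} = {..<m}"
    by (rule endo_inj_surj) (use inj assms in auto)
  have "(\<Sum>k<m. g ((w+k) mod m)) = (\<Sum>k\<in>(\<lambda>k. (w+k) mod m) ` {..<m}. g k)"
    by (simp add: sum.reindex[OF inj])
  then show ?thesis using img by simp
qed

lemma pm4: "(a::int) \<in> {1,-1} \<Longrightarrow> (b::int) \<in> {1,-1} \<Longrightarrow> 4 dvd (a*b - (a + b - 1))"
  by auto

lemma pm2: "(a::int) \<in> {1,-1} \<Longrightarrow> 2 dvd (a - 1)"
  by auto

lemma S1_mod:
  assumes "binary_seq (2*m) \<phi>" "m > 0"
  shows "4 dvd S1 m \<phi> w"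
proof -
  let ?A = "arr m \<phi> 0" and ?B = "arr m \<phi> 1" and ?s = "\<lambda>k. (w+k) mod m"
  have pm: "\<And>a k. arr m \<phi> a k \<in> {1,-1}" using arr_pm[OF assms] by blast
  have "S1 m \<phi> w = (\<Sum>k<m. (?A k * ?B (?s k) - (?A k + ?B (?s k) - 1)) - (?B k * ?A (?s k) - (?B k + ?A (?s k) - 1)))
     + ((\<Sum>k<m. ?A k) - (\<Sum>k<m. ?A (?s k)) + (\<Sum>k<m. ?B (?s k)) - (\<Sum>k<m. ?B k))"
    unfolding S1_def by (simp add: sum_subtractf sum.distrib algebra_simps)
  also have "\<dots> = (\<Sum>k<m. (?A k * ?B (?s k) - (?A k + ?B (?s k) - 1)) - (?B k * ?A (?s k) - (?B k + ?A (?s k) - 1)))"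
    using rot_sum[OF assms(2), of ?A w] rot_sum[OF assms(2), of ?B w] by simp
  finally have eq: "S1 m \<phi> w = \<dots>" .
  have "4 dvd (\<Sum>k<m. (?A k * ?B (?s k) - (?A k + ?B (?s k) - 1)) - (?B k * ?A (?s k) - (?B k + ?A (?s k) - 1)))"
    by (rule dvd_sum) (intro dvd_diff pm4 pm)
  then show ?thesis using eq by simp
qed

lemma S0_mod:
  assumes "binary_seq (2*m) \<phi>" "odd m"
  shows "4 dvd S0 m \<phi> w - 2"
proof -
  have m0: "m > 0" using assms by (auto intro: Nat.gr0I)
  let ?A = "arr m \<phi> 0" and ?B = "arr m \<phi> 1" and ?s = "\<lambda>k. (w+k) mod m"
  have pm: "\<And>a k. arr m \<phi> a k \<in> {1,-1}" using arr_pm[OF assms(1) m0] by blast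
  have "S0 m \<phi> w = (\<Sum>k<m. (?A k * ?A (?s k) - (?A k + ?A (?s k) - 1)) + (?B k * ?B (?s k) - (?B k + ?B (?s k) - 1)))
     + ((\<Sum>k<m. ?A k) + (\<Sum>k<m. ?A (?s k)) + (\<Sum>k<m. ?B (?s k)) + (\<Sum>k<m. ?B k) - 2 * int m)"
    unfolding S0_def by (simp add: sum_subtractf sum.distrib algebra_simps)
  also have "\<dots> = (\<Sum>k<m. (?A k * ?A (?s k) - (?A k + ?A (?s k) - 1)) + (?B k * ?B (?s k) - (?B k + ?B (?s k) - 1)))
     + (2 * (\<Sum>k<m. ?A k - 1) + 2 * (\<Sum>k<m. ?B k - 1) + 2 * int m)"
    using rot_sum[OF m0, of ?A w] rot_sum[OF m0, of ?B w] by (simp add: sum_subtractf)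
  finally have eq: "S0 m \<phi> w = \<dots>" .
  have d1: "4 dvd (\<Sum>k<m. (?A k * ?A (?s k) - (?A k + ?A (?s k) - 1)) + (?B k * ?B (?s k) - (?B k + ?B (?s k) - 1)))"
    by (rule dvd_sum) (intro dvd_add pm4 pm)
  have d2: "2 dvd (\<Sum>k<m. ?A k - 1)" "2 dvd (\<Sum>k<m. ?B k - 1)"
    by (rule dvd_sum, rule pm2, rule pm)+
  have d3: "4 dvd 2 * int m - 2" using assms(2) by presburger
  have "4 dvd 2 * (\<Sum>k<m. ?A k - 1)" "4 dvd 2 * (\<Sum>k<m. ?B k - 1)" using d2 by (auto elim!: dvdE)
  then show ?thesis unfolding eq using d1 d3
    by (metis (no_types, lifting) add_diff_eq dvd_add)
qed


lemma autocorr_exp: "autocorr (4*m) (\<lambda>x. of_int (expansion m \<phi> x)) x = of_int (RR m \<phi> x)"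
  unfolding autocorr_def RR_def by simp

lemma quat_prod:
  fixes a b c d :: int
  shows "(1 - \<i>) / 2 * (of_int a + \<i> * of_int b) * cnj ((1 - \<i>) / 2 * (of_int c + \<i> * of_int d))
    = (of_int (a*c + b*d) - \<i> * of_int (a*d - b*c)) / 2"
  by (simp add: complex_eq_iff algebra_simps; simp add: field_simps)

lemma autocorr_quat: "autocorr m (quat_of m \<phi>) w = (of_int (S0 m \<phi> w) - \<i> * of_int (S1 m \<phi> w)) / 2"
proof -
  let ?P = "\<lambda>k. arr m \<phi> 0 k * arr m \<phi> 0 ((w+k) mod m) + arr m \<phi> 1 k * arr m \<phi> 1 ((w+k) mod m)"
  let ?Q = "\<lambda>k. arr m \<phi> 0 k * arr m \<phi> 1 ((w+k) mod m) - arr m \<phi> 1 k * arr m \<phi> 0 ((w+k) mod m)"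
  have "autocorr m (quat_of m \<phi>) w = (\<Sum>k<m. (of_int (?P k) - \<i> * of_int (?Q k)) / 2)"
    unfolding autocorr_def quat_of_def quat_prod by (simp add: add.commute)
  also have "\<dots> = ((\<Sum>k<m. of_int (?P k)) - \<i> * (\<Sum>k<m. of_int (?Q k))) / 2"
    by (simp only: sum_divide_distrib[symmetric] sum_subtractf sum_distrib_left)
  also have "\<dots> = (of_int (S0 m \<phi> w) - \<i> * of_int (S1 m \<phi> w)) / 2"
    unfolding S0_def S1_def by (simp only: of_int_sum)
  finally show ?thesis .
qed

lemma cmod_half: "cmod ((of_int a - \<i> * of_int b) / 2) = 1 \<longleftrightarrow> a^2 + b^2 = (4::int)"
proof -
  have "cmod ((of_int a - \<i> * of_int b) / 2) = sqrt ((real_of_int a / 2)^2 + (real_of_int b / 2)^2)"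
    by (simp add: cmod_def)
  also have "\<dots> = 1 \<longleftrightarrow> (real_of_int a / 2)^2 + (real_of_int b / 2)^2 = 1" by simp
  also have "\<dots> \<longleftrightarrow> real_of_int (a^2 + b^2) = 4" by (simp add: power_divide) (auto simp: field_simps)
  also have "\<dots> \<longleftrightarrow> a^2 + b^2 = 4" by (simp only: of_int_eq_numeral_iff)
  finally show ?thesis .
qed

lemma int_sq:
  fixes a b :: int
  assumes "4 dvd a - 2" "4 dvd b"
  shows "a^2 + b^2 = 4 \<longleftrightarrow> (a = 2 \<or> a = -2) \<and> b = 0"
proof
  assume h: "a^2 + b^2 = 4"
  obtain c where c: "b = 4*c" using assms(2) by (auto elim: dvdE)
  have "c = 0"
  proof (rule ccontr)
    assume "c \<noteq> 0"
    then have "c^2 \<ge> 1" by (simp add: int_one_le_iff_zero_less)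
    then have "b^2 \<ge> 16" unfolding c by (simp add: power_mult_distrib)
    moreover have "a^2 \<ge> 0" by simp
    ultimately show False using h by linarith
  qed
  then have b0: "b = 0" using c by simp
  then have "a^2 = 2^2" using h by simp
  then have "a = 2 \<or> a = -2" using power2_eq_iff by blast
  then show "(a = 2 \<or> a = -2) \<and> b = 0" using b0 by simp
next
  assume "(a = 2 \<or> a = -2) \<and> b = 0"
  then show "a^2 + b^2 = 4" by auto
qed

lemma card_odd: "card {x. x < 4*m \<and> odd x} = 2*(m::nat)"
proof -
  have "{x. x < 4*m \<and> odd x} = (\<lambda>i. 2*i+1) ` {..<2*m}"
  proof
    show "{x. x < 4*m \<and> odd x} \<subseteq> (\<lambda>i. 2*i+1) ` {..<2*m}"
    proof
      fix x assume "x \<in> {x. x < 4*m \<and> odd x}"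
      then have "x < 4*m" "odd x" by auto
      then have "x = 2*(x div 2) + 1" "x div 2 < 2*m" by presburger+
      then show "x \<in> (\<lambda>i. 2*i+1) ` {..<2*m}" by blast
    qed
  qed auto
  moreover have "inj_on (\<lambda>i::nat. 2*i+1) {..<2*m}" by (rule inj_onI) simp
  ultimately show ?thesis by (simp add: card_image)
qed


lemma S1_zero: "S1 m \<phi> 0 = 0"
  unfolding S1_def by (rule sum.neutral) (simp add: mult.commute)

lemma crt_surj:
  assumes "odd (m::nat)" "t < 4" "w < m"
  shows "\<exists>x<4*m. x mod 4 = t \<and> x mod m = w"
proof -
  have "(t, w) \<in> (\<lambda>y. (y mod 4, y mod m)) ` {..<4*m}" using pi_img[OF assms(1)] assms by simp
  then show ?thesis by auto
qed

lemma even_zero: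
  assumes "odd (m::nat)" "x < 4*m" "x mod m = 0" "even x"
  shows "x = 0 \<or> x = 2*m"
proof -
  have "[x = 0] (mod 2)" "[x = 0] (mod m)" using assms by (auto simp: cong_def)
  moreover have "coprime (2::nat) m" using assms by simp
  ultimately have "[x = 0] (mod 2*m)" using coprime_cong_mult_nat by blast
  then obtain q where q: "x = 2*m*q" by (auto simp: cong_0_iff elim: dvdE)
  have "q < 2" using assms(2) q by (cases "q \<ge> 2") (auto dest: mult_le_mono2[of 2 q "2*m"])
  then have "q = 0 \<or> q = 1" by auto
  then show ?thesis using q by auto
qed

lemma quat_val:
  fixes a b :: int
  assumes "a \<in> {1,-1}" "b \<in> {1,-1}"
  shows "(1 - \<i>) / 2 * (of_int a + \<i> * of_int b) \<in> {1, -1, \<i>, -\<i>}"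
  using assms by (auto simp: complex_eq_iff)

lemma cint: "((of_int r :: complex) = - 4) \<longleftrightarrow> r = -4"
  by (metis of_int_eq_iff of_int_minus of_int_numeral)

theorem corollary1:
  fixes m :: nat and \<phi> :: "nat \<Rightarrow> int"
  assumes "m > 1" and "odd m" and "binary_seq (2*m) \<phi>"
  shows "OQS m (quat_of m \<phi>) \<longleftrightarrow> GOBS m \<phi>"
proof -
  have om: "odd m" and bs: "binary_seq (2*m) \<phi>" and m0: "m > 0" using assms by auto
  define C where "C = (\<forall>w. 1 \<le> w \<and> w \<le> m-1 \<longrightarrow> (S0 m \<phi> w = 2 \<or> S0 m \<phi> w = -2) \<and> S1 m \<phi> w = 0)"
  have pm: "\<And>a k. arr m \<phi> a k \<in> {1,-1}" using arr_pm[OF bs m0] by blast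
  have quat: "quaternary_seq m (quat_of m \<phi>)"
    unfolding quaternary_seq_def quat_of_def using quat_val[OF pm pm] by blast
  have md: "\<And>w. 4 dvd S0 m \<phi> w - 2" "\<And>w. 4 dvd S1 m \<phi> w"
    using S0_mod[OF bs om] S1_mod[OF bs m0] by blast+
  have O: "OQS m (quat_of m \<phi>) \<longleftrightarrow> C"
    unfolding OQS_def C_def autocorr_quat cmod_half using int_sq[OF md(1) md(2)] om quat by simp
  have G: "GOBS m \<phi> \<longleftrightarrow> C"
  proof
    assume g: "GOBS m \<phi>"
    then have P1: "\<And>x. x < 4*m \<Longrightarrow> x \<noteq> 0 \<Longrightarrow> x \<noteq> 2*m \<Longrightarrow> RR m \<phi> x \<in> {0,4,-4}"
      unfolding GOBS_def Let_def autocorr_exp by (auto simp: cint)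
    show C unfolding C_def
    proof (intro allI impI)
      fix w assume w: "1 \<le> w \<and> w \<le> m-1"
      then have wm: "w < m" using m0 by auto
      obtain x0 where x0: "x0 < 4*m" "x0 mod 4 = 0" "x0 mod m = w" using crt_surj[OF om _ wm, of 0] by auto
      obtain x1 where x1: "x1 < 4*m" "x1 mod 4 = 1" "x1 mod m = w" using crt_surj[OF om _ wm, of 1] by auto
      have "x0 \<noteq> 0" "x0 \<noteq> 2*m" using x0(3) w by (intro notI; simp)+
      moreover have "x1 \<noteq> 0" "x1 \<noteq> 2*m" using x1(3) w by (intro notI; simp)+
      ultimately have "RR m \<phi> x0 \<in> {0,4,-4}" "RR m \<phi> x1 \<in> {0,4,-4}" using P1 x0 x1 by auto
      then have "2 * S0 m \<phi> w \<in> {0,4,-4}" "2 * S1 m \<phi> w \<in> {0,4,-4}"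
        using RR_S[OF om, of \<phi> x0] RR_S[OF om, of \<phi> x1] x0 x1 by auto
      then show "(S0 m \<phi> w = 2 \<or> S0 m \<phi> w = -2) \<and> S1 m \<phi> w = 0"
        using md(1)[of w] md(2)[of w] by auto
    qed
  next
    assume c: C
    have S1z: "\<And>w. w < m \<Longrightarrow> S1 m \<phi> w = 0"
    proof -
      fix w assume "w < m"
      then show "S1 m \<phi> w = 0" using c S1_zero[of m \<phi>] unfolding C_def
        by (cases "w = 0") auto
    qed
    have S0nz: "S0 m \<phi> w \<noteq> 0" for w using md(1)[of w] by presburger
    have Z: "\<And>x. x < 4*m \<Longrightarrow> (RR m \<phi> x = 0 \<longleftrightarrow> odd x) \<and> (x \<noteq> 0 \<and> x \<noteq> 2*m \<longrightarrow> RR m \<phi> x \<in> {0,4,-4})"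
    proof -
      fix x assume x: "x < 4*m"
      have wm: "x mod m < m" using m0 by simp
      have "x mod 4 = 0 \<or> x mod 4 = 1 \<or> x mod 4 = 2 \<or> x mod 4 = 3" by presburger
      then show "(RR m \<phi> x = 0 \<longleftrightarrow> odd x) \<and> (x \<noteq> 0 \<and> x \<noteq> 2*m \<longrightarrow> RR m \<phi> x \<in> {0,4,-4})"
      proof (elim disjE)
        assume h: "x mod 4 = 1"
        then have "odd x" by presburger
        then show ?thesis using RR_S[OF om, of \<phi> x] h S1z[OF wm] by simp
      next
        assume h: "x mod 4 = 3"
        then have "odd x" by presburger
        then show ?thesis using RR_S[OF om, of \<phi> x] h S1z[OF wm] by simp
      next
        assume h: "x mod 4 = 0"
        then have ev: "even x" by presburger
        have "x \<noteq> 0 \<and> x \<noteq> 2*m \<longrightarrow> S0 m \<phi> (x mod m) = 2 \<or> S0 m \<phi> (x mod m) = -2"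
        proof
          assume "x \<noteq> 0 \<and> x \<noteq> 2*m"
          then have "x mod m \<noteq> 0" using even_zero[OF om x _ ev] by auto
          then have "1 \<le> x mod m \<and> x mod m \<le> m-1" using wm by auto
          then show "S0 m \<phi> (x mod m) = 2 \<or> S0 m \<phi> (x mod m) = -2" using c unfolding C_def by blast
        qed
        then show ?thesis using RR_S[OF om, of \<phi> x] h ev S0nz[of "x mod m"] by auto
      next
        assume h: "x mod 4 = 2"
        then have ev: "even x" by presburger
        have "x \<noteq> 0 \<and> x \<noteq> 2*m \<longrightarrow> S0 m \<phi> (x mod m) = 2 \<or> S0 m \<phi> (x mod m) = -2"
        proof
          assume "x \<noteq> 0 \<and> x \<noteq> 2*m"
          then have "x mod m \<noteq> 0" using even_zero[OF om x _ ev] by auto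
          then have "1 \<le> x mod m \<and> x mod m \<le> m-1" using wm by auto
          then show "S0 m \<phi> (x mod m) = 2 \<or> S0 m \<phi> (x mod m) = -2" using c unfolding C_def by blast
        qed
        then show ?thesis using RR_S[OF om, of \<phi> x] h ev S0nz[of "x mod m"] by auto
      qed
    qed
    have "{x. x < 4*m \<and> of_int (RR m \<phi> x) = (0::complex)} = {x. x < 4*m \<and> odd x}"
      using Z by auto
    then show "GOBS m \<phi>"
      unfolding GOBS_def Let_def autocorr_exp using bs Z card_odd[of m] by (auto simp: cint)
  qed
  show ?thesis using O G by simp
qed

end
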